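(* Let $n>2k$ be integers and let $A\in\mathscr F_k^5$ satisfy, for all $\alpha\in\mathscr I_{k-1}^5$, $$(n+2k-4\alpha_3-4)A_{\alpha+\vec e_3}=(n+2k-4\alpha_4-4)A_{\alpha+\vec e_4},$$ $$(n+2k-4\alpha_5-4)A_{\alpha+\vec e_5}=(n+2k-4\alpha_1-4)A_{\alpha+\vec e_1},$$ $$(n+2k-4\alpha_3-4)A_{\alpha+\vec e_3}=(n+2k-4\alpha_1-4)A_{\alpha+\vec e_1}-4(\alpha_1-\alpha_3-\alpha_4+\alpha_5)A_{\alpha+\vec e_2}.$$ Let $\alpha\in\mathscr I_k^5$ with $\alpha_4=\alpha_5$. Then $A_\alpha=A_{\alpha'}$, where $\alpha':=(\alpha_3,\alpha_2,\alpha_1,\alpha_5,\alpha_4)$.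
   Context: Notation: $\mathscr I_k^\ell:=\{\alpha\in\mathbb N_0^\ell:\alpha_1+\cdots+\alpha_\ell=k\}$; $\mathscr F_k^\ell$ is the real vector space of functions $A:\mathscr I_k^\ell\to\mathbb R$, $A_\alpha:=A(\alpha)$; $\vec e_j\in\mathbb N_0^\ell$ is the tuple with $1$ in slot $j$ and $0$ elsewhere. *)

theory Defs
  imports Main Complex_Main
begin

end

theory Submission
  imports Defs
begin

lemma sym_inner:
  fixes G :: "nat \<Rightarrow> nat \<Rightarrow> nat \<Rightarrow> real"
  assumes rec: "\<And>p r q. p + r + q + 1 = k \<Longrightarrow>
      G p r (q + 1) = G (p + 1) r q - 4 * (real p - real q) * G p (r + 1) q"
    and outer: "\<And>a b. a + (r + 1) + b = k \<Longrightarrow> G a (r + 1) b = G b (r + 1) a"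
  shows "a + r + (a + d) = k \<Longrightarrow> G a r (a + d) = G (a + d) r a"
proof (induction d arbitrary: a rule: less_induct)
  case (less d)
  show ?case
  proof (cases "d = 0")
    case True then show ?thesis by simp
  next
    case False
    show ?thesis
    proof (cases "d = 1")
      case True
      have "G a r (a + 1) = G (a + 1) r a - 4 * (real a - real a) * G a (r + 1) a"
        using rec[of a r a] less.prems True by simp
      then show ?thesis using True by simp
    next
      case False2: False
      then obtain e where d: "d = e + 2" using \<open>d \<noteq> 0\<close>
        by (metis add_2_eq_Suc' not0_implies_Suc One_nat_def)
      have IH: "G (a + 1) r (a + 1 + e) = G (a + 1 + e) r (a + 1)"
        using less.IH[of e "a+1"] less.prems d by simp
      have s1: "a + r + (a + e + 1) + 1 = k" using less.prems d by simp
      have s2: "(a + e + 1) + r + a + 1 = k" using less.prems d by simp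
      have r1: "G a r ((a + e + 1) + 1) = G (a + 1) r (a + e + 1) - 4 * (real a - real (a + e + 1)) * G a (r + 1) (a + e + 1)"
        using rec[OF s1] .
      have r2: "G (a + e + 1) r (a + 1) = G (a + e + 1 + 1) r a - 4 * (real (a + e + 1) - real a) * G (a + e + 1) (r + 1) a"
        using rec[OF s2] .
      have o: "G a (r + 1) (a + e + 1) = G (a + e + 1) (r + 1) a"
        using outer[of a "a+e+1"] less.prems d by simp
      have e1: "a + d = a + e + 1 + 1" using d by simp
      have e2: "a + 1 + e = a + e + 1" by simp
      have IH': "G (a + 1) r (a + e + 1) = G (a + e + 1) r (a + 1)" using IH e2 by simp
      have r1': "G a r (a + e + 1 + 1) = G (a + 1) r (a + e + 1) + 4 * (real e + 1) * G a (r + 1) (a + e + 1)"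
        using r1 by (simp add: algebra_simps)
      have r2': "G (a + e + 1 + 1) r a = G (a + e + 1) r (a + 1) + 4 * (real e + 1) * G a (r + 1) (a + e + 1)"
        using r2 o by (simp add: algebra_simps)
      show ?thesis unfolding e1 using r1' r2' IH' by simp
    qed
  qed
qed

lemma sym_all:
  fixes G :: "nat \<Rightarrow> nat \<Rightarrow> nat \<Rightarrow> real"
  assumes rec: "\<And>p r q. p + r + q + 1 = k \<Longrightarrow>
      G p r (q + 1) = G (p + 1) r q - 4 * (real p - real q) * G p (r + 1) q"
  shows "r + t = k \<Longrightarrow> a + r + b = k \<Longrightarrow> G a r b = G b r a"
proof (induction t arbitrary: r a b)
  case 0 then show ?case by simp
next
  case (Suc t)
  have outer: "\<And>a b. a + (r + 1) + b = k \<Longrightarrow> G a (r + 1) b = G b (r + 1) a"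
    using Suc.IH[of "r+1"] Suc.prems by simp
  have gen: "G a' r (a' + d) = G (a' + d) r a'" if "a' + r + (a' + d) = k" for a' d
    using sym_inner[of k G r, OF rec outer] that by blast
  show ?case
  proof (cases "a \<le> b")
    case True
    then obtain d where "b = a + d" using le_Suc_ex by blast
    then show ?thesis using gen Suc.prems by simp
  next
    case False
    then obtain d where "a = b + d" using le_Suc_ex[of b a] by auto
    then show ?thesis using gen[of b d] Suc.prems by simp
  qed
qed

theorem lemma4p3:
  fixes n :: int and k :: nat
    and A :: "nat \<Rightarrow> nat \<Rightarrow> nat \<Rightarrow> nat \<Rightarrow> nat \<Rightarrow> real"
  assumes nk: "n > 2 * int k"
    and h1: "\<And>a1 a2 a3 a4 a5. a1 + a2 + a3 + a4 + a5 + 1 = k \<Longrightarrow>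
      (real_of_int n + 2 * real k - 4 * real a3 - 4) * A a1 a2 (a3 + 1) a4 a5
      = (real_of_int n + 2 * real k - 4 * real a4 - 4) * A a1 a2 a3 (a4 + 1) a5"
    and h2: "\<And>a1 a2 a3 a4 a5. a1 + a2 + a3 + a4 + a5 + 1 = k \<Longrightarrow>
      (real_of_int n + 2 * real k - 4 * real a5 - 4) * A a1 a2 a3 a4 (a5 + 1)
      = (real_of_int n + 2 * real k - 4 * real a1 - 4) * A (a1 + 1) a2 a3 a4 a5"
    and h3: "\<And>a1 a2 a3 a4 a5. a1 + a2 + a3 + a4 + a5 + 1 = k \<Longrightarrow>
      (real_of_int n + 2 * real k - 4 * real a3 - 4) * A a1 a2 (a3 + 1) a4 a5
      = (real_of_int n + 2 * real k - 4 * real a1 - 4) * A (a1 + 1) a2 a3 a4 a5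
        - 4 * (real a1 - real a3 - real a4 + real a5) * A a1 (a2 + 1) a3 a4 a5"
    and alpha: "a1 + a2 + a3 + a4 + a5 = k"
    and eq45: "a4 = a5"
  shows "A a1 a2 a3 a4 a5 = A a3 a2 a1 a5 a4"
proof -
  define c where "c j = real_of_int n + 2 * real k - 4 * real j - 4" for j :: nat
  define P where "P x = (\<Prod>j<x. c j)" for x :: nat
  define B where "B x1 x2 x3 x4 x5 = A x1 x2 x3 x4 x5 * (P x1 * P x3 * P x4 * P x5)"
    for x1 x2 x3 x4 x5
  have PS: "P (Suc x) = P x * c x" for x unfolding P_def by simp
  have B1: "B x1 x2 (x3 + 1) x4 x5 = B x1 x2 x3 (x4 + 1) x5"
    if "x1 + x2 + x3 + x4 + x5 + 1 = k" for x1 x2 x3 x4 x5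
  proof -
    have "c x3 * A x1 x2 (x3 + 1) x4 x5 = c x4 * A x1 x2 x3 (x4 + 1) x5"
      using h1[OF that] unfolding c_def by simp
    then have "(c x3 * A x1 x2 (x3 + 1) x4 x5) * (P x1 * P x3 * P x4 * P x5)
       = (c x4 * A x1 x2 x3 (x4 + 1) x5) * (P x1 * P x3 * P x4 * P x5)" by simp
    then show ?thesis unfolding B_def by (simp add: PS algebra_simps)
  qed
  have B2: "B x1 x2 x3 x4 (x5 + 1) = B (x1 + 1) x2 x3 x4 x5"
    if "x1 + x2 + x3 + x4 + x5 + 1 = k" for x1 x2 x3 x4 x5
  proof -
    have "c x5 * A x1 x2 x3 x4 (x5 + 1) = c x1 * A (x1 + 1) x2 x3 x4 x5"
      using h2[OF that] unfolding c_def by simp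
    then have "(c x5 * A x1 x2 x3 x4 (x5 + 1)) * (P x1 * P x3 * P x4 * P x5)
       = (c x1 * A (x1 + 1) x2 x3 x4 x5) * (P x1 * P x3 * P x4 * P x5)" by simp
    then show ?thesis unfolding B_def by (simp add: PS algebra_simps)
  qed
  have B3: "B x1 x2 (x3 + 1) x4 x5 = B (x1 + 1) x2 x3 x4 x5
        - 4 * (real x1 - real x3 - real x4 + real x5) * B x1 (x2 + 1) x3 x4 x5"
    if "x1 + x2 + x3 + x4 + x5 + 1 = k" for x1 x2 x3 x4 x5
  proof -
    have "c x3 * A x1 x2 (x3 + 1) x4 x5 = c x1 * A (x1 + 1) x2 x3 x4 x5
        - 4 * (real x1 - real x3 - real x4 + real x5) * A x1 (x2 + 1) x3 x4 x5"
      using h3[OF that] unfolding c_def by simp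
    then have "(c x3 * A x1 x2 (x3 + 1) x4 x5) * (P x1 * P x3 * P x4 * P x5)
       = (c x1 * A (x1 + 1) x2 x3 x4 x5
        - 4 * (real x1 - real x3 - real x4 + real x5) * A x1 (x2 + 1) x3 x4 x5) * (P x1 * P x3 * P x4 * P x5)" by simp
    then show ?thesis unfolding B_def by (simp add: PS algebra_simps)
  qed
  have C4: "x1 + x2 + x3 + x4 + x5 = k \<Longrightarrow> B x1 x2 x3 x4 x5 = B x1 x2 (x3 + x4) 0 x5"
    for x1 x2 x3 x4 x5
  proof (induction x4 arbitrary: x3)
    case 0 then show ?case by simp
  next
    case (Suc x4)
    have "B x1 x2 x3 (Suc x4) x5 = B x1 x2 (x3 + 1) x4 x5"
      using B1[of x1 x2 x3 x4 x5] Suc.prems by simp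
    also have "\<dots> = B x1 x2 (x3 + Suc x4) 0 x5" using Suc.IH[of "x3+1"] Suc.prems by simp
    finally show ?case .
  qed
  have C5: "x1 + x2 + x3 + x5 = k \<Longrightarrow> B x1 x2 x3 0 x5 = B (x1 + x5) x2 x3 0 0"
    for x1 x2 x3 x5
  proof (induction x5 arbitrary: x1)
    case 0 then show ?case by simp
  next
    case (Suc x5)
    have "B x1 x2 x3 0 (Suc x5) = B (x1 + 1) x2 x3 0 x5"
      using B2[of x1 x2 x3 0 x5] Suc.prems by simp
    also have "\<dots> = B (x1 + Suc x5) x2 x3 0 0" using Suc.IH[of "x1+1"] Suc.prems by simp
    finally show ?case .
  qed
  define G where "G p r q = B p r q 0 0" for p r q
  have rec: "G p r (q + 1) = G (p + 1) r q - 4 * (real p - real q) * G p (r + 1) q"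
    if "p + r + q + 1 = k" for p r q
    using B3[of p r q 0 0] that unfolding G_def by simp
  have Gs: "G (a1 + a5) a2 (a3 + a4) = G (a3 + a4) a2 (a1 + a5)"
    using sym_all[of k G, OF rec, of a2 "k - a2"] alpha by simp
  have L: "B a1 a2 a3 a4 a5 = G (a1 + a5) a2 (a3 + a4)"
    using C4[of a1 a2 a3 a4 a5] C5[of a1 a2 "a3+a4" a5] alpha unfolding G_def by simp
  have R: "B a3 a2 a1 a5 a4 = G (a3 + a4) a2 (a1 + a5)"
    using C4[of a3 a2 a1 a5 a4] C5[of a3 a2 "a1+a5" a4] alpha eq45 unfolding G_def
    by (simp add: add.commute)
  have BB: "B a1 a2 a3 a4 a5 = B a3 a2 a1 a5 a4" using L R Gs by simp
  have cpos: "c j > 0" if "j < k" for j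
    using that nk unfolding c_def by linarith
  have Pnz: "P x \<noteq> 0" if "x \<le> k" for x
  proof -
    have "\<forall>j\<in>{..<x}. c j \<noteq> 0"
    proof
      fix j assume "j \<in> {..<x}"
      then have "j < k" using that by simp
      then show "c j \<noteq> 0" using cpos by fastforce
    qed
    then show ?thesis unfolding P_def by simp
  qed
  have nz: "P a1 * P a3 * P a4 * P a5 \<noteq> 0"
    using Pnz alpha by simp
  have "A a1 a2 a3 a4 a5 * (P a1 * P a3 * P a4 * P a5) = A a3 a2 a1 a5 a4 * (P a1 * P a3 * P a4 * P a5)"
    using BB unfolding B_def eq45 by (simp add: algebra_simps)
  then show ?thesis using nz by simp
qed

end
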